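(* Let $\Theta$ be a compact metric space, $\mathcal{H}$ a Hilbert space, and $T:\Theta\to L_1(\mathcal{H})$ a regular function with self-adjoint values. Then there exists a trace-class operator $T_\Theta$ such that $T(\theta)\le T_\Theta$ for every $\theta\in\Theta$.
   Context: $L_1(\mathcal{H})$ is the space of trace-class operators; for self-adjoint operators $A\ge B$ means $A-B$ is positive. With $d$ the metric on $\Theta$, for compact $K\subseteq\Theta$ and $\delta>0$ let $K_\delta:=\{(\theta,\eta)\in K\times K: d(\theta,\eta)<\delta\}$ and $\omega_T(K_\delta):=\inf\{\|X\|_1: X\in L_1(\mathcal{H}),\ -X\le T(\theta)-T(\eta)\le X\ \forall(\theta,\eta)\in K_\delta\}$ (infimum of the empty set is $+\infty$). $T$ is regular if $\lim_{\delta\to0}\omega_T(K_\delta)=0$ for every compact $K\subseteq\Theta$. *)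

theory Defs
  imports "HOL-Analysis.Analysis"
begin

text \<open>A complex Hilbert space is modelled as a real Hilbert space (type class
  real_inner + complete_space) together with an orthogonal complex structure J
  (multiplication by the imaginary unit): J is bounded real-linear, J (J x) = -x
  and J preserves the real inner product.  The complex inner product (linear in the
  second argument) is then cinner J x y = inner x y + i * inner (J x) y.\<close>

definition complex_structure :: "('h::{real_inner,complete_space} \<Rightarrow> 'h) \<Rightarrow> bool" where
  "complex_structure J \<longleftrightarrow> bounded_linear J \<and> (\<forall>x. J (J x) = - x) \<and>
     (\<forall>x y. inner (J x) (J y) = inner x y)"

definition cinner :: "('h::real_inner \<Rightarrow> 'h) \<Rightarrow> 'h \<Rightarrow> 'h \<Rightarrow> complex" where
  "cinner J x y = Complex (inner x y) (inner (J x) y)"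

definition bounded_op :: "('h::real_inner \<Rightarrow> 'h) \<Rightarrow> ('h \<Rightarrow> 'h) \<Rightarrow> bool" where
  "bounded_op J A \<longleftrightarrow> bounded_linear A \<and> (\<forall>x. A (J x) = J (A x))"

definition selfadjoint_op :: "('h::real_inner \<Rightarrow> 'h) \<Rightarrow> ('h \<Rightarrow> 'h) \<Rightarrow> bool" where
  "selfadjoint_op J A \<longleftrightarrow> bounded_op J A \<and> (\<forall>x y. cinner J x (A y) = cinner J (A x) y)"

definition loewner_le :: "('h::real_inner \<Rightarrow> 'h) \<Rightarrow> ('h \<Rightarrow> 'h) \<Rightarrow> ('h \<Rightarrow> 'h) \<Rightarrow> bool" where
  "loewner_le J A B \<longleftrightarrow> selfadjoint_op J A \<and> selfadjoint_op J B \<and>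
     (\<forall>x. cinner J x (B x - A x) \<in> \<real> \<and> Re (cinner J x (B x - A x)) \<ge> 0)"

definition orthonormal_fam :: "('h::real_inner \<Rightarrow> 'h) \<Rightarrow> nat \<Rightarrow> (nat \<Rightarrow> 'h) \<Rightarrow> bool" where
  "orthonormal_fam J n e \<longleftrightarrow> (\<forall>i<n. \<forall>j<n. cinner J (e i) (e j) = (if i = j then 1 else 0))"

text \<open>Trace norm: \<parallel>X\<parallel>_1 = sup of \<Sum>|<f_i, X e_i>| over pairs of (finite) orthonormal
  families; this equals tr|X| (and is +\<infinity> iff X is not trace class).\<close>
definition trace_norm :: "('h::real_inner \<Rightarrow> 'h) \<Rightarrow> ('h \<Rightarrow> 'h) \<Rightarrow> ereal" where
  "trace_norm J X = (SUP p \<in> {(n, e, f). orthonormal_fam J n e \<and> orthonormal_fam J n f}.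
      (case p of (n, e, f) \<Rightarrow> ereal (\<Sum>i<n. cmod (cinner J (f i) (X (e i))))))"

definition trace_class :: "('h::real_inner \<Rightarrow> 'h) \<Rightarrow> ('h \<Rightarrow> 'h) \<Rightarrow> bool" where
  "trace_class J X \<longleftrightarrow> bounded_op J X \<and> trace_norm J X < \<infinity>"

text \<open>K_\<delta> and the modulus \<omega>_T(K_\<delta>) (Inf {} = \<infinity> in ereal).\<close>
definition Kdelta :: "'a::metric_space set \<Rightarrow> real \<Rightarrow> ('a \<times> 'a) set" where
  "Kdelta K \<delta> = {(\<theta>, \<eta>). \<theta> \<in> K \<and> \<eta> \<in> K \<and> dist \<theta> \<eta> < \<delta>}"

definition omega :: "('h::real_inner \<Rightarrow> 'h) \<Rightarrow> ('a::metric_space \<Rightarrow> 'h \<Rightarrow> 'h) \<Rightarrow> 'a set \<Rightarrow> real \<Rightarrow> ereal" where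
  "omega J T K \<delta> = Inf {trace_norm J X | X. trace_class J X \<and>
      (\<forall>(\<theta>, \<eta>) \<in> Kdelta K \<delta>.
         loewner_le J (- X) (\<lambda>x. T \<theta> x - T \<eta> x) \<and> loewner_le J (\<lambda>x. T \<theta> x - T \<eta> x) X)}"

definition regular :: "('h::real_inner \<Rightarrow> 'h) \<Rightarrow> ('a::metric_space \<Rightarrow> 'h \<Rightarrow> 'h) \<Rightarrow> bool" where
  "regular J T \<longleftrightarrow> (\<forall>K. compact K \<longrightarrow> ((\<lambda>\<delta>. omega J T K \<delta>) \<longlongrightarrow> 0) (at_right 0))"

end

theory Submission
  imports Defs
begin

context
  fixes J :: "'h::{real_inner,complete_space} \<Rightarrow> 'h"
  assumes cs: "complex_structure J"
begin

lemma J_bl: "bounded_linear J" using cs by (simp add: complex_structure_def)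
lemma JJ[simp]: "J (J x) = - x" using cs by (simp add: complex_structure_def)
lemma JinJ[simp]: "inner (J x) (J y) = inner x y" using cs by (simp add: complex_structure_def)
lemma J_add: "J (x + y) = J x + J y" using J_bl by (simp add: linear_simps)
lemma J_scale: "J (c *\<^sub>R x) = c *\<^sub>R J x" using J_bl by (simp add: linear_simps)
lemma J_minus: "J (x - y) = J x - J y" using J_bl by (simp add: linear_simps)
lemma J_zero[simp]: "J 0 = 0" using J_bl by (simp add: linear_simps)
lemma J_sum: "J (sum f A) = (\<Sum>a\<in>A. J (f a))"
  using linear_sum[OF bounded_linear.linear[OF J_bl]] by simp
lemma Jin_left: "inner (J x) y = - inner x (J y)"
proof -
  have "inner (J x) y = inner (J (J x)) (J y)" by (rule JinJ[symmetric])
  thus ?thesis by simp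
qed
lemma Jin_self[simp]: "inner (J x) x = 0"
  using Jin_left[of x x] by (simp add: inner_commute)
lemma Jin_self'[simp]: "inner x (J x) = 0"
  using Jin_self[of x] by (simp add: inner_commute)
lemma norm_J[simp]: "norm (J x) = norm x"
  by (simp add: norm_eq_sqrt_inner)

lemma orth_fam_iff: "orthonormal_fam J n w \<longleftrightarrow>
   (\<forall>i<n. \<forall>j<n. inner (w i) (w j) = (if i = j then 1 else 0) \<and> inner (J (w i)) (w j) = 0)"
  unfolding orthonormal_fam_def cinner_def
  by (auto simp: complex_eq_iff)

lemma cinner_norm: "cmod (cinner J x y) \<le> \<bar>inner x y\<bar> + \<bar>inner (J x) y\<bar>"
  unfolding cinner_def using cmod_le[of "Complex (inner x y) (inner (J x) y)"] by simp

lemma sa_iff: "selfadjoint_op J A \<longleftrightarrow> bounded_op J A \<and> (\<forall>x y. inner x (A y) = inner (A x) y)"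
proof
  assume a: "selfadjoint_op J A"
  then show "bounded_op J A \<and> (\<forall>x y. inner x (A y) = inner (A x) y)"
    unfolding selfadjoint_op_def cinner_def by (auto simp: complex_eq_iff)
next
  assume a: "bounded_op J A \<and> (\<forall>x y. inner x (A y) = inner (A x) y)"
  then have c: "\<And>x. A (J x) = J (A x)" by (simp add: bounded_op_def)
  show "selfadjoint_op J A" unfolding selfadjoint_op_def cinner_def
    using a by (auto simp: complex_eq_iff c[symmetric])
qed

lemma sa_sym: "selfadjoint_op J A \<Longrightarrow> inner x (A y) = inner (A x) y"
  using sa_iff by blast

lemma sa_J_imag: assumes "selfadjoint_op J A" shows "inner (J x) (A x) = 0"
proof -
  have c: "A (J x) = J (A x)" using assms by (simp add: selfadjoint_op_def bounded_op_def)
  have "inner (J x) (A x) = inner (A (J x)) x" using sa_sym[OF assms] by simp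
  also have "\<dots> = inner (J (A x)) x" using c by simp
  also have "\<dots> = - inner (A x) (J x)" by (simp add: Jin_left)
  also have "\<dots> = - inner (J x) (A x)" by (simp add: inner_commute)
  finally show ?thesis by simp
qed

lemma sa_diff: assumes "selfadjoint_op J A" "selfadjoint_op J B"
  shows "selfadjoint_op J (\<lambda>x. B x - A x)"
  using assms unfolding sa_iff bounded_op_def
  by (auto simp: bounded_linear_sub inner_diff_left inner_diff_right J_minus)

lemma sa_add: assumes "selfadjoint_op J A" "selfadjoint_op J B"
  shows "selfadjoint_op J (\<lambda>x. A x + B x)"
  using assms unfolding sa_iff bounded_op_def
  by (auto simp: bounded_linear_add inner_add_left inner_add_right J_add)

lemma loewner_iff: assumes "selfadjoint_op J A" "selfadjoint_op J B"
  shows "loewner_le J A B \<longleftrightarrow> (\<forall>x. inner x (A x) \<le> inner x (B x))"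
proof -
  have im: "inner (J x) (B x - A x) = 0" for x
    using sa_J_imag[OF sa_diff[OF assms], of x] by simp
  have "cinner J x (B x - A x) = complex_of_real (inner x (B x - A x))" for x
    unfolding cinner_def using im[of x] by (simp add: complex_eq_iff)
  then show ?thesis using assms unfolding loewner_le_def
    by (auto simp: inner_diff_right)
qed

lemma tn_ge: assumes "orthonormal_fam J n e" "orthonormal_fam J n f"
  shows "ereal (\<Sum>i<n. cmod (cinner J (f i) (X (e i)))) \<le> trace_norm J X"
  unfolding trace_norm_def
  by (rule SUP_upper2[of "(n,e,f)"]) (use assms in auto)

lemma tn_nonneg: "0 \<le> trace_norm J X"
  using tn_ge[of 0 "\<lambda>_. 0" "\<lambda>_. 0" X] by (simp add: orthonormal_fam_def zero_ereal_def)

lemma tn_le: assumes "\<And>n e f. orthonormal_fam J n e \<Longrightarrow> orthonormal_fam J n f \<Longrightarrow>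
     (\<Sum>i<n. cmod (cinner J (f i) (X (e i)))) \<le> B"
  shows "trace_norm J X \<le> ereal B"
  unfolding trace_norm_def by (rule SUP_least) (use assms in auto)

lemma cinner_add_right: "cinner J x (y + z) = cinner J x y + cinner J x z"
  by (simp add: cinner_def complex_eq_iff inner_add_right)

lemma tn_add: assumes "trace_class J A" "trace_class J B"
  shows "trace_class J (\<lambda>x. A x + B x)"
proof -
  obtain a where a: "trace_norm J A = ereal a"
    using assms tn_nonneg[of A] unfolding trace_class_def by (cases "trace_norm J A") auto
  obtain b where b: "trace_norm J B = ereal b"
    using assms tn_nonneg[of B] unfolding trace_class_def by (cases "trace_norm J B") auto
  have "trace_norm J (\<lambda>x. A x + B x) \<le> ereal (a + b)"
  proof (rule tn_le)
    fix n e f assume o: "orthonormal_fam J n e" "orthonormal_fam J n f"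
    have "(\<Sum>i<n. cmod (cinner J (f i) (A (e i) + B (e i)))) \<le>
          (\<Sum>i<n. cmod (cinner J (f i) (A (e i)))) + (\<Sum>i<n. cmod (cinner J (f i) (B (e i))))"
      unfolding sum.distrib[symmetric] cinner_add_right by (rule sum_mono) (rule norm_triangle_ineq)
    also have "\<dots> \<le> a + b" using tn_ge[OF o, of A] tn_ge[OF o, of B] a b by simp
    finally show "(\<Sum>i<n. cmod (cinner J (f i) (A (e i) + B (e i)))) \<le> a + b" .
  qed
  moreover have "bounded_op J (\<lambda>x. A x + B x)" using assms
    by (auto simp: trace_class_def bounded_op_def bounded_linear_add J_add)
  ultimately show ?thesis unfolding trace_class_def by auto
qed

end

definition rON :: "nat \<Rightarrow> (nat \<Rightarrow> 'h::real_inner) \<Rightarrow> bool" where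
  "rON N u \<longleftrightarrow> (\<forall>i<N. \<forall>j<N. inner (u i) (u j) = (if i = j then 1 else 0))"

definition proj :: "nat \<Rightarrow> (nat \<Rightarrow> 'h::real_inner) \<Rightarrow> 'h \<Rightarrow> 'h" where
  "proj N u x = (\<Sum>k<N. inner (u k) x *\<^sub>R u k)"

lemma rON_comb: assumes "rON N u" "j < N"
  shows "inner (u j) (\<Sum>k<N. c k *\<^sub>R u k) = c j"
proof -
  have "inner (u j) (\<Sum>k<N. c k *\<^sub>R u k) = (\<Sum>k<N. c k * inner (u j) (u k))"
    by (simp add: inner_sum_right)
  also have "\<dots> = (\<Sum>k<N. if k = j then c k else 0)"
    using assms by (intro sum.cong) (auto simp: rON_def)
  also have "\<dots> = c j" using assms by simp
  finally show ?thesis .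
qed

lemma rON_comb2: assumes "rON N u"
  shows "inner (\<Sum>k<N. c k *\<^sub>R u k) (\<Sum>k<N. d k *\<^sub>R u k) = (\<Sum>k<N. c k * d k)"
proof -
  have "inner (\<Sum>k<N. c k *\<^sub>R u k) (\<Sum>k<N. d k *\<^sub>R u k) =
     (\<Sum>j<N. c j * inner (u j) (\<Sum>k<N. d k *\<^sub>R u k))"
    by (simp add: inner_sum_left)
  also have "\<dots> = (\<Sum>j<N. c j * d j)" using rON_comb[OF assms] by simp
  finally show ?thesis .
qed

lemma proj_orth: assumes "rON N u" "j < N" shows "inner (u j) (x - proj N u x) = 0"
  using rON_comb[OF assms, of "\<lambda>k. inner (u k) x"] by (simp add: proj_def inner_diff_right)

lemma proj_orth2: assumes "rON N u" shows "inner (proj N u x) (x - proj N u x) = 0"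
  unfolding proj_def inner_sum_left using proj_orth[OF assms] by (simp add: proj_def)

lemma proj_norm2: assumes "rON N u" shows "(norm (proj N u x))\<^sup>2 = (\<Sum>k<N. (inner (u k) x)\<^sup>2)"
  unfolding power2_norm_eq_inner proj_def rON_comb2[OF assms] by (simp add: power2_eq_square)

lemma pythag: assumes "inner a b = 0" shows "(norm (a + b))\<^sup>2 = (norm a)\<^sup>2 + (norm b)\<^sup>2"
  using assms by (simp add: power2_norm_eq_inner inner_add_left inner_add_right inner_commute)

lemma proj_pythag: assumes "rON N u"
  shows "(norm x)\<^sup>2 = (norm (proj N u x))\<^sup>2 + (norm (x - proj N u x))\<^sup>2"
  using pythag[OF proj_orth2[OF assms, of x]] by simp

lemma bessel: assumes "rON N u" shows "(\<Sum>k<N. (inner (u k) x)\<^sup>2) \<le> (norm x)\<^sup>2"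
  using proj_pythag[OF assms, of x] proj_norm2[OF assms, of x] by simp

lemma sum_even_odd: fixes f :: "nat \<Rightarrow> 'a::comm_monoid_add" shows "(\<Sum>k<2*n. f k) = (\<Sum>i<n. f (2*i) + f (2*i+1))"
  by (induction n) (auto simp: numeral_2_eq_2 add.assoc)

definition evod :: "('h \<Rightarrow> 'h) \<Rightarrow> (nat \<Rightarrow> 'h) \<Rightarrow> nat \<Rightarrow> 'h" where
  "evod J w k = (if even k then w (k div 2) else J (w (k div 2)))"

context
  fixes J :: "'h::{real_inner,complete_space} \<Rightarrow> 'h"
  assumes cs: "complex_structure J"
begin

lemma cON_rON: assumes "orthonormal_fam J n w" shows "rON n w"
  using assms unfolding orth_fam_iff[OF cs] rON_def by auto

lemma cON_evod: assumes "orthonormal_fam J m w" shows "rON (2*m) (evod J w)"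
proof -
  have o: "\<And>i j. i<m \<Longrightarrow> j<m \<Longrightarrow> inner (w i) (w j) = (if i = j then 1 else 0) \<and> inner (J (w i)) (w j) = 0"
    using assms unfolding orth_fam_iff[OF cs] by auto
  show ?thesis unfolding rON_def evod_def
  proof (intro allI impI)
    fix i j assume ij: "i < 2*m" "j < 2*m"
    then have "i div 2 < m" "j div 2 < m" by auto
    moreover have "i = j \<longleftrightarrow> i div 2 = j div 2 \<and> even i = even j"
      by (metis div_mult_mod_eq odd_iff_mod_2_eq_one even_iff_mod_2_eq_zero)
    ultimately show "inner (if even i then w (i div 2) else J (w (i div 2)))
       (if even j then w (j div 2) else J (w (j div 2))) = (if i = j then 1 else 0)"
      using o by (auto simp: Jin_left[OF cs] JJ[OF cs] inner_commute)
  qed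
qed

lemma evod_sum: "(\<Sum>k<2*n. f (evod J w k)) = (\<Sum>i<n. f (w i) + f (J (w i)))"
  unfolding sum_even_odd by (simp add: evod_def)

end

lemma compact_combs: fixes u :: "nat \<Rightarrow> 'h::real_normed_vector"
  shows "compact {\<Sum>k<N. c k *\<^sub>R u k | c. \<forall>k<N. \<bar>c k\<bar> \<le> 1}"
proof (induction N)
  case 0 then show ?case by simp
next
  case (Suc N)
  let ?K = "{\<Sum>k<N. c k *\<^sub>R u k | c. \<forall>k<N. \<bar>c k\<bar> \<le> 1}"
  let ?L = "(\<lambda>t. t *\<^sub>R u N) ` {-1..1}"
  have cL: "compact ?L"
    by (rule compact_continuous_image) (auto intro!: continuous_intros)
  have eq: "{\<Sum>k<Suc N. c k *\<^sub>R u k | c. \<forall>k<Suc N. \<bar>c k\<bar> \<le> 1} = {x + y |x y. x \<in> ?K \<and> y \<in> ?L}"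
  proof (intro equalityI subsetI)
    fix z assume "z \<in> {\<Sum>k<Suc N. c k *\<^sub>R u k | c. \<forall>k<Suc N. \<bar>c k\<bar> \<le> 1}"
    then obtain c where z: "z = (\<Sum>k<Suc N. c k *\<^sub>R u k)" and c: "\<forall>k<Suc N. \<bar>c k\<bar> \<le> 1" by blast
    have "(\<Sum>k<N. c k *\<^sub>R u k) \<in> ?K" using c by auto
    moreover have "c N *\<^sub>R u N \<in> ?L" using c by (auto simp: abs_le_iff)
    ultimately show "z \<in> {x + y |x y. x \<in> ?K \<and> y \<in> ?L}" using z by auto
  next
    fix z assume "z \<in> {x + y |x y. x \<in> ?K \<and> y \<in> ?L}"
    then obtain c t where z: "z = (\<Sum>k<N. c k *\<^sub>R u k) + t *\<^sub>R u N" and c: "\<forall>k<N. \<bar>c k\<bar> \<le> 1"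
      and t: "t \<in> {-1..1}" by blast
    define c' where "c' = c(N := t)"
    have "z = (\<Sum>k<Suc N. c' k *\<^sub>R u k)" unfolding z c'_def
      by (simp add: sum.lessThan_Suc)
    moreover have "\<forall>k<Suc N. \<bar>c' k\<bar> \<le> 1" using c t by (auto simp: c'_def less_Suc_eq)
    ultimately show "z \<in> {\<Sum>k<Suc N. c k *\<^sub>R u k | c. \<forall>k<Suc N. \<bar>c k\<bar> \<le> 1}" by blast
  qed
  show ?case unfolding eq by (rule compact_sums[OF Suc cL])
qed

lemma cauchy_crit: fixes s :: "nat \<Rightarrow> 'a::metric_space"
  assumes "\<And>a b. (dist (s a) (s b))\<^sup>2 \<le> \<beta> a + \<beta> b" "\<beta> \<longlonglongrightarrow> 0"
  shows "Cauchy s"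
proof (rule metric_CauchyI)
  fix e :: real assume e: "e > 0"
  then have "e^2/2 > 0" by simp
  then have "eventually (\<lambda>n. dist (\<beta> n) 0 < e^2/2) sequentially"
    using assms(2) by (rule tendstoD[rotated])
  then have "eventually (\<lambda>n. \<bar>\<beta> n\<bar> < e^2/2) sequentially" by (simp add: dist_real_def)
  then obtain M where M: "\<And>n. n \<ge> M \<Longrightarrow> \<bar>\<beta> n\<bar> < e^2/2" by (auto simp: eventually_sequentially)
  show "\<exists>M. \<forall>m\<ge>M. \<forall>n\<ge>M. dist (s m) (s n) < e"
  proof (intro exI allI impI)
    fix m n assume "m \<ge> M" "n \<ge> M"
    then have "(dist (s m) (s n))\<^sup>2 < e^2" using assms(1)[of m n] M[of m] M[of n] by linarith
    then show "dist (s m) (s n) < e" using e by (simp add: power_less_imp_less_base)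
  qed
qed

lemma quad_zero: fixes a b :: real
  assumes "\<And>t. 2*t*b + t^2*a \<ge> 0" shows "b = 0"
proof -
  have "a \<ge> 0" using assms[of 1] assms[of "-1"] by simp
  define t where "t = - b / (a + 1)"
  have "(2*t*b + t^2*a) * (a+1)^2 = -(b^2*(a+2))"
  proof -
    have ta: "t*(a+1) = -b" using \<open>a \<ge> 0\<close> by (simp add: t_def)
    have "(2*t*b + t^2*a) * (a+1)^2 = 2*b*(t*(a+1))*(a+1) + (t*(a+1))^2*a"
      by (simp add: power2_eq_square algebra_simps)
    also have "\<dots> = -(b^2*(a+2))" unfolding ta by (simp add: power2_eq_square algebra_simps)
    finally show ?thesis .
  qed
  moreover have "(2*t*b + t^2*a) * (a+1)^2 \<ge> 0" using assms[of t] by simp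
  ultimately have "b^2*(a+2) \<le> 0" by linarith
  moreover have "b \<noteq> 0 \<Longrightarrow> b^2*(a+2) > 0" using \<open>a \<ge> 0\<close> by simp
  ultimately show ?thesis by force
qed

locale opctx =
  fixes J :: "'h::{real_inner,complete_space} \<Rightarrow> 'h" and D :: "'h \<Rightarrow> 'h"
  assumes cs: "complex_structure J" and D_bl: "bounded_linear D"
    and D_sym: "\<And>x y. inner x (D y) = inner (D x) y"
begin

lemma D_add: "D (x + y) = D x + D y" using D_bl by (simp add: linear_simps)
lemma D_scale: "D (c *\<^sub>R x) = c *\<^sub>R D x" using D_bl by (simp add: linear_simps)
lemma D_diff: "D (x - y) = D x - D y" using D_bl by (simp add: linear_simps)
lemma D_zero[simp]: "D 0 = 0" using D_bl by (simp add: linear_simps)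

lemma quad_scale: "inner (c *\<^sub>R x) (D (c *\<^sub>R x)) = c^2 * inner x (D x)"
  by (simp add: D_scale power2_eq_square)

lemma D_bound: obtains K where "K \<ge> 0" "\<And>x. \<bar>inner x (D x)\<bar> \<le> K * (norm x)^2"
proof -
  obtain K where K: "K > 0" "\<And>x. norm (D x) \<le> norm x * K"
    using bounded_linear.pos_bounded[OF D_bl] by blast
  have "\<bar>inner x (D x)\<bar> \<le> K * (norm x)^2" for x
  proof -
    have "\<bar>inner x (D x)\<bar> \<le> norm x * norm (D x)" by (rule Cauchy_Schwarz_ineq2)
    also have "\<dots> \<le> norm x * (norm x * K)" using K(2)[of x] by (simp add: mult_left_mono)
    finally show ?thesis by (simp add: power2_eq_square algebra_simps)
  qed
  then show ?thesis using that[of K] K(1) by simp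
qed

lemma Q_lin: "lam * (norm (a + t *\<^sub>R v))^2 - inner (a + t *\<^sub>R v) (D (a + t *\<^sub>R v)) =
   (lam * (norm a)^2 - inner a (D a)) + 2*t*(lam * inner a v - inner a (D v))
   + t^2 * (lam * (norm v)^2 - inner v (D v))"
proof -
  have s: "inner v (D a) = inner a (D v)" by (metis D_sym inner_commute)
  have s2: "inner v a = inner a v" by (rule inner_commute)
  have e1: "(norm (a + t *\<^sub>R v))^2 = (norm a)^2 + 2*t*inner a v + t^2 * (norm v)^2"
    unfolding power2_norm_eq_inner by (simp add: inner_add_left inner_add_right s2 power2_eq_square algebra_simps)
  have e2: "inner (a + t *\<^sub>R v) (D (a + t *\<^sub>R v)) = inner a (D a) + 2*t*inner a (D v) + t^2 * inner v (D v)"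
    by (simp add: inner_add_left inner_add_right D_add D_scale s power2_eq_square algebra_simps)
  show ?thesis unfolding e1 e2 by (simp add: algebra_simps)
qed

lemma Q_par: "(lam * (norm (a - b))^2 - inner (a - b) (D (a - b))) +
    (lam * (norm (a + b))^2 - inner (a + b) (D (a + b))) =
    2 * (lam * (norm a)^2 - inner a (D a)) + 2 * (lam * (norm b)^2 - inner b (D b))"
  using Q_lin[of lam a 1 b] Q_lin[of lam a "-1" b] by simp

end

lemma norm_diff_sq: fixes u w :: "'a::real_normed_vector"
  shows "(norm (u - w))^2 \<le> 2*(norm u)^2 + 2*(norm w)^2"
proof -
  have "norm (u - w) \<le> norm u + norm w" by (rule norm_triangle_ineq4)
  then have "(norm (u - w))^2 \<le> (norm u + norm w)^2" by (simp add: power_mono)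
  also have "\<dots> \<le> 2*(norm u)^2 + 2*(norm w)^2"
    using sum_squares_ge_zero[of "norm u - norm w" 0] by (simp add: power2_eq_square algebra_simps)
  finally show ?thesis .
qed

context opctx begin

lemma greedy:
  assumes S: "subspace S" "\<And>x. x\<in>S \<Longrightarrow> J x \<in> S"
   and bound: "\<And>n w. orthonormal_fam J n w \<Longrightarrow> (\<forall>i<n. w i \<in> S) \<Longrightarrow> (\<Sum>i<n. inner (w i) (D (w i))) \<le> B"
   and c: "c > 0"
  obtains m w where "orthonormal_fam J m w" "\<forall>i<m. w i \<in> S"
    "\<And>z. z \<in> S \<Longrightarrow> (\<forall>i<m. inner (w i) z = 0 \<and> inner (J (w i)) z = 0) \<Longrightarrow> inner z (D z) \<le> c * (norm z)^2"
proof -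
  have "\<exists>m w. orthonormal_fam J m w \<and> (\<forall>i<m. w i \<in> S) \<and>
    (\<forall>z. z \<in> S \<longrightarrow> (\<forall>i<m. inner (w i) z = 0 \<and> inner (J (w i)) z = 0) \<longrightarrow> inner z (D z) \<le> c * (norm z)^2)"
  proof (rule ccontr)
    assume neg: "\<not> ?thesis"
    have H: "\<exists>w. orthonormal_fam J m w \<and> (\<forall>i<m. w i \<in> S) \<and> (\<forall>i<m. inner (w i) (D (w i)) \<ge> c)" for m
    proof (induction m)
      case 0 then show ?case by (auto simp: orthonormal_fam_def)
    next
      case (Suc m)
      then obtain w where w: "orthonormal_fam J m w" "\<forall>i<m. w i \<in> S" "\<forall>i<m. inner (w i) (D (w i)) \<ge> c"
        by blast
      from neg w obtain z where z: "z \<in> S" "\<forall>i<m. inner (w i) z = 0 \<and> inner (J (w i)) z = 0"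
        "inner z (D z) > c * (norm z)^2" by force
      have nz: "z \<noteq> 0" using z(3) by auto
      define z' where "z' = (1 / norm z) *\<^sub>R z"
      have z'S: "z' \<in> S" using z(1) S(1) by (simp add: z'_def subspace_scale)
      have nz': "norm z' = 1" using nz by (simp add: z'_def)
      have "inner z' (D z') = (1/norm z)^2 * inner z (D z)" unfolding z'_def quad_scale ..
      also have "\<dots> > (1/norm z)^2 * (c * (norm z)^2)" using z(3) nz by (intro mult_strict_left_mono) auto
      also have "(1/norm z)^2 * (c * (norm z)^2) = c" using nz by (simp add: field_simps)
      finally have cz: "inner z' (D z') > c" .
      have oz: "\<forall>i<m. inner (w i) z' = 0 \<and> inner (J (w i)) z' = 0" using z(2) by (simp add: z'_def)
      have zz: "inner z' z' = 1" using nz' by (simp add: power2_norm_eq_inner[symmetric])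
      define w' where "w' = w(m := z')"
      have "orthonormal_fam J (Suc m) w'"
        unfolding orth_fam_iff[OF cs]
      proof (intro allI impI)
        fix i j assume ij: "i < Suc m" "j < Suc m"
        have wo: "\<forall>i<m. \<forall>j<m. inner (w i) (w j) = (if i = j then 1 else 0) \<and> inner (J (w i)) (w j) = 0"
          using w(1) unfolding orth_fam_iff[OF cs] .
        show "inner (w' i) (w' j) = (if i = j then 1 else 0) \<and> inner (J (w' i)) (w' j) = 0"
        proof (cases "i = m"; cases "j = m")
          assume "i = m" "j = m" then show ?thesis using zz by (simp add: w'_def Jin_self[OF cs])
        next
          assume "i = m" "j \<noteq> m" then have "j < m" using ij by auto
          then show ?thesis using oz \<open>i = m\<close> \<open>j \<noteq> m\<close>
            by (simp add: w'_def Jin_left[OF cs] inner_commute)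
        next
          assume "i \<noteq> m" "j = m" then have "i < m" using ij by auto
          then show ?thesis using oz \<open>i \<noteq> m\<close> \<open>j = m\<close> by (simp add: w'_def)
        next
          assume "i \<noteq> m" "j \<noteq> m" then have "i < m" "j < m" using ij by auto
          then show ?thesis using wo \<open>i \<noteq> m\<close> \<open>j \<noteq> m\<close> by (simp add: w'_def)
        qed
      qed
      moreover have "\<forall>i<Suc m. w' i \<in> S" using w(2) z'S by (auto simp: w'_def less_Suc_eq)
      moreover have "\<forall>i<Suc m. inner (w' i) (D (w' i)) \<ge> c" using w(3) cz
        by (auto simp: w'_def less_Suc_eq)
      ultimately show ?case by blast
    qed
    obtain m :: nat where m: "B < real m * c" using ex_less_of_nat_mult[OF c] by blast
    from H[of m] obtain w where w: "orthonormal_fam J m w" "\<forall>i<m. w i \<in> S" "\<forall>i<m. inner (w i) (D (w i)) \<ge> c"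
      by blast
    have "real m * c = (\<Sum>i<m. c)" by simp
    also have "\<dots> \<le> (\<Sum>i<m. inner (w i) (D (w i)))" using w(3) by (intro sum_mono) auto
    also have "\<dots> \<le> B" using bound[OF w(1) w(2)] .
    finally show False using m by simp
  qed
  then show ?thesis using that by blast
qed

end

context opctx begin

lemma max_eig:
  assumes S: "subspace S" "closed S" "\<And>x. x\<in>S \<Longrightarrow> J x \<in> S" "\<And>x. x\<in>S \<Longrightarrow> D x \<in> S"
   and bound: "\<And>n w. orthonormal_fam J n w \<Longrightarrow> (\<forall>i<n. w i \<in> S) \<Longrightarrow> (\<Sum>i<n. inner (w i) (D (w i))) \<le> B"
   and pos: "\<exists>x\<in>S. norm x = 1 \<and> inner x (D x) > 0"
  shows "\<exists>e\<in>S. norm e = 1 \<and> D e = inner e (D e) *\<^sub>R e \<and> inner e (D e) > 0 \<and>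
           (\<forall>x\<in>S. inner x (D x) \<le> inner e (D e) * (norm x)^2)"
proof -
  obtain K where K: "K \<ge> 0" "\<And>x. \<bar>inner x (D x)\<bar> \<le> K * (norm x)^2" using D_bound by blast
  define Qs where "Qs = {inner x (D x) | x. x \<in> S \<and> norm x = 1}"
  define lam where "lam = Sup Qs"
  have bdd: "bdd_above Qs" unfolding Qs_def bdd_above_def
  proof (intro exI[of _ K] ballI)
    fix y assume "y \<in> {inner x (D x) | x. x \<in> S \<and> norm x = 1}"
    then obtain x where "y = inner x (D x)" "norm x = 1" by blast
    then show "y \<le> K" using K(2)[of x] by (simp add: abs_le_iff)
  qed
  have ne: "Qs \<noteq> {}" using pos by (auto simp: Qs_def)
  have lam_pos: "lam > 0"
  proof -
    obtain x where "x \<in> S" "norm x = 1" "inner x (D x) > 0" using pos by blast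
    then have "inner x (D x) \<le> lam" unfolding lam_def by (intro cSup_upper bdd) (auto simp: Qs_def)
    then show ?thesis using \<open>inner x (D x) > 0\<close> by simp
  qed
  have le_lam: "inner x (D x) \<le> lam * (norm x)^2" if "x \<in> S" for x
  proof (cases "x = 0")
    case True then show ?thesis by simp
  next
    case False
    define x' where "x' = (1 / norm x) *\<^sub>R x"
    have "x' \<in> S" using that S(1) by (simp add: x'_def subspace_scale)
    moreover have "norm x' = 1" using False by (simp add: x'_def)
    ultimately have "inner x' (D x') \<le> lam" unfolding lam_def by (intro cSup_upper bdd) (auto simp: Qs_def)
    moreover have "x = norm x *\<^sub>R x'" using False by (simp add: x'_def)
    then have "inner x (D x) = (norm x)^2 * inner x' (D x')" by (metis quad_scale)
    ultimately show ?thesis using mult_right_mono[of "inner x' (D x')" lam "(norm x)^2"] by (simp add: mult.commute)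
  qed
  define q where "q x = lam * (norm x)^2 - inner x (D x)" for x
  have q_nn: "q x \<ge> 0" if "x \<in> S" for x using le_lam[OF that] by (simp add: q_def)
  have q_par: "q (a - b) + q (a + b) = 2 * q a + 2 * q b" for a b unfolding q_def by (rule Q_par)
  define C where "C = \<bar>lam\<bar> + K"
  have C: "C \<ge> 0" using K(1) by (simp add: C_def)
  have q_up: "q x \<le> C * (norm x)^2" for x
  proof -
    have "lam * (norm x)^2 \<le> \<bar>lam\<bar> * (norm x)^2" by (simp add: mult_right_mono)
    moreover have "- inner x (D x) \<le> K * (norm x)^2" using K(2)[of x] by (simp add: abs_le_iff)
    ultimately show ?thesis by (simp add: q_def C_def algebra_simps)
  qed
  obtain m w where w: "orthonormal_fam J m w" "\<forall>i<m. w i \<in> S"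
    and gr: "\<And>z. z \<in> S \<Longrightarrow> (\<forall>i<m. inner (w i) z = 0 \<and> inner (J (w i)) z = 0) \<Longrightarrow> inner z (D z) \<le> lam/2 * (norm z)^2"
    using greedy[OF S(1) S(3) bound, of "lam/2"] lam_pos by auto
  define N where "N = 2*m"
  define v where "v = evod J w"
  have vON: "rON N v" unfolding N_def v_def by (rule cON_evod[OF cs w(1)])
  have vS: "v k \<in> S" if "k < N" for k using that w(2) S(3) by (auto simp: v_def evod_def N_def)
  have vnorm: "norm (v k) = 1" if "k < N" for k
    using vON that unfolding rON_def by (simp add: norm_eq_sqrt_inner)
  have projS: "proj N v x \<in> S" for x unfolding proj_def
    using vS S(1) by (intro subspace_sum subspace_scale) auto
  define Pz where "Pz z \<longleftrightarrow> z \<in> S \<and> (\<forall>i<m. inner (w i) z = 0 \<and> inner (J (w i)) z = 0)" for z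
  have Pz_proj: "Pz (x - proj N v x)" if "x \<in> S" for x
  proof -
    have "x - proj N v x \<in> S" using that projS S(1) by (simp add: subspace_diff)
    moreover have "inner (w i) (x - proj N v x) = 0 \<and> inner (J (w i)) (x - proj N v x) = 0" if "i < m" for i
      using proj_orth[OF vON, of "2*i" x] proj_orth[OF vON, of "2*i+1" x] that
      by (simp add: N_def v_def evod_def)
    ultimately show ?thesis by (simp add: Pz_def)
  qed
  have Pz_diff: "Pz (a - b)" if "Pz a" "Pz b" for a b
    using that S(1) by (simp add: Pz_def subspace_diff inner_diff_right)
  have q_low: "lam/2 * (norm z)^2 \<le> q z" if "Pz z" for z
    using gr[of z] that by (simp add: Pz_def q_def)
  have "\<forall>n. \<exists>x. x \<in> S \<and> norm x = 1 \<and> lam - inverse (real (Suc n)) < inner x (D x)"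
  proof
    fix n
    have "lam - inverse (real (Suc n)) < lam" by simp
    then obtain y where "y \<in> Qs" "lam - inverse (real (Suc n)) < y"
      using less_cSup_iff[OF ne bdd] unfolding lam_def by blast
    then show "\<exists>x. x \<in> S \<and> norm x = 1 \<and> lam - inverse (real (Suc n)) < inner x (D x)"
      by (auto simp: Qs_def)
  qed
  then obtain xs where xs: "\<And>n. xs n \<in> S" "\<And>n. norm (xs n) = 1"
     "\<And>n. lam - inverse (real (Suc n)) < inner (xs n) (D (xs n))" by metis
  have qxs: "q (xs n) \<le> inverse (real (Suc n))" for n
    using xs(2,3)[of n] by (simp add: q_def)
  define ys where "ys n = proj N v (xs n)" for n
  have ysK: "ys n \<in> {\<Sum>k<N. c k *\<^sub>R v k | c. \<forall>k<N. \<bar>c k\<bar> \<le> 1}" for n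
  proof -
    have "\<bar>inner (v k) (xs n)\<bar> \<le> 1" if "k < N" for k
      using Cauchy_Schwarz_ineq2[of "v k" "xs n"] vnorm[OF that] xs(2)[of n] by simp
    then show ?thesis unfolding ys_def proj_def
      by (intro CollectI exI[of _ "\<lambda>k. inner (v k) (xs n)"]) auto
  qed
  let ?KS = "{\<Sum>k<N. c k *\<^sub>R v k | c. \<forall>k<N. \<bar>c k\<bar> \<le> 1}"
  have sc: "seq_compact ?KS"
    by (rule compact_imp_seq_compact[OF compact_combs])
  have ysK': "\<forall>n. ys n \<in> ?KS" using ysK by (rule allI)
  obtain l r where "l \<in> ?KS" and lr: "strict_mono r" "(ys \<circ> r) \<longlonglongrightarrow> l"
    by (rule seq_compactE[OF sc ysK'])
  define xr where "xr n = xs (r n)" for n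
  define yr where "yr n = ys (r n)" for n
  have "yr = ys \<circ> r" by (rule ext) (simp add: yr_def)
  then have yr_l: "yr \<longlonglongrightarrow> l" using lr(2) by simp
  define Y where "Y n = (norm (yr n - l))^2" for n
  have Y0: "Y \<longlonglongrightarrow> 0"
  proof -
    have "(\<lambda>n. yr n - l) \<longlonglongrightarrow> 0" using tendsto_diff[OF yr_l tendsto_const[of l]] by simp
    then have "(\<lambda>n. norm (yr n - l)) \<longlonglongrightarrow> 0" using tendsto_norm_zero by blast
    then show ?thesis unfolding Y_def using tendsto_power[of _ 0 _ 2] by fastforce
  qed
  have qr0: "(\<lambda>n. q (xr n)) \<longlonglongrightarrow> 0"
  proof (rule tendsto_sandwich[of "\<lambda>_. 0" _ _ "\<lambda>n. inverse (real (Suc n))"])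
    show "\<forall>\<^sub>F n in sequentially. 0 \<le> q (xr n)" using q_nn xs(1) by (simp add: xr_def)
    have "q (xr n) \<le> inverse (real (Suc n))" for n
    proof -
      have "n \<le> r n" using seq_suble[OF lr(1)] .
      then have inv: "inverse (real (Suc (r n))) \<le> inverse (real (Suc n))"
        by (simp add: le_imp_inverse_le)
      show ?thesis unfolding xr_def by (rule order_trans[OF qxs[of "r n"] inv])
    qed
    then show "\<forall>\<^sub>F n in sequentially. q (xr n) \<le> inverse (real (Suc n))" by simp
  qed (rule tendsto_const LIMSEQ_inverse_real_of_nat)+
  define \<beta> where "\<beta> n = 4 * Y n + 4/lam * (4 * q (xr n) + 4 * C * Y n)" for n
  have \<beta>0: "\<beta> \<longlonglongrightarrow> 0"
  proof -
    have "(\<lambda>n. 4 * Y n + 4/lam * (4 * q (xr n) + 4 * C * Y n)) \<longlonglongrightarrow> 4*0 + 4/lam*(4*0 + 4*C*0)"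
      by (intro tendsto_intros Y0 qr0)
    then show ?thesis by (simp add: \<beta>_def[abs_def])
  qed
  have key: "(dist (xr a) (xr b))^2 \<le> \<beta> a + \<beta> b" for a b
  proof -
    define dy where "dy = yr a - yr b"
    define dz where "dz = (xr a - yr a) - (xr b - yr b)"
    define dx where "dx = xr a - xr b"
    have xrS: "xr n \<in> S" for n using xs(1) by (simp add: xr_def)
    have yrS: "yr n \<in> S" for n using projS by (simp add: yr_def ys_def)
    have Pzr: "Pz (xr n - yr n)" for n using Pz_proj[OF xrS] by (simp add: yr_def ys_def xr_def)
    have Pdz: "Pz dz" unfolding dz_def by (rule Pz_diff[OF Pzr Pzr])
    have dxS: "dx \<in> S" "dy \<in> S" using xrS yrS S(1) by (auto simp: dx_def dy_def subspace_diff)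
    have dxdy: "dx - dy = dz" by (simp add: dx_def dy_def dz_def)
    have h1: "q dz \<le> 2 * q dx + 2 * q dy"
      using q_par[of dx dy] q_nn[of "dx + dy"] dxS S(1) dxdy by (simp add: subspace_add)
    have h2: "q dx \<le> 2 * q (xr a) + 2 * q (xr b)"
      using q_par[of "xr a" "xr b"] q_nn[of "xr a + xr b"] xrS S(1) by (simp add: subspace_add dx_def)
    have h3: "q dy \<le> C * (norm dy)^2" by (rule q_up)
    have h4: "(norm dy)^2 \<le> 2 * Y a + 2 * Y b"
      using norm_diff_sq[of "yr a - l" "yr b - l"] by (simp add: Y_def dy_def)
    have h5: "lam/2 * (norm dz)^2 \<le> q dz" by (rule q_low[OF Pdz])
    have h6: "(norm dx)^2 \<le> 2 * (norm dy)^2 + 2 * (norm dz)^2"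
    proof -
      have "dx = dy - (-dz)" using dxdy by (simp add: algebra_simps)
      then show ?thesis using norm_diff_sq[of dy "-dz"] by simp
    qed
    define R where "R = 4 * q (xr a) + 4 * q (xr b) + 4 * C * (Y a + Y b)"
    have "C * (norm dy)^2 \<le> C * (2 * Y a + 2 * Y b)" using h4 C by (rule mult_left_mono)
    then have "lam/2 * (norm dz)^2 \<le> R" using h1 h2 h3 h5 by (simp add: R_def algebra_simps)
    then have "(norm dz)^2 * lam \<le> 2 * R" by (simp add: mult.commute)
    then have hz: "(norm dz)^2 \<le> 2 * R / lam" using lam_pos by (simp add: pos_le_divide_eq)
    have "\<beta> a + \<beta> b = 4 * (Y a + Y b) + 4 * R / lam"
      using lam_pos by (simp add: \<beta>_def R_def field_simps)
    moreover have "(dist (xr a) (xr b))^2 = (norm dx)^2" by (simp add: dist_norm dx_def)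
    ultimately show ?thesis using h6 h4 hz by simp
  qed
  have "Cauchy xr" by (rule cauchy_crit[OF key \<beta>0])
  then obtain e where e: "xr \<longlonglongrightarrow> e" using Cauchy_convergent_iff convergent_def by blast
  have eS: "e \<in> S" using closed_sequentially[OF S(2) _ e] xs(1) by (simp add: xr_def)
  have ne1: "norm e = 1"
  proof -
    have "(\<lambda>n. norm (xr n)) \<longlonglongrightarrow> norm e" using tendsto_norm[OF e] .
    moreover have "(\<lambda>n. norm (xr n)) = (\<lambda>n. 1)" using xs(2) by (simp add: xr_def)
    ultimately show ?thesis using LIMSEQ_unique tendsto_const by metis
  qed
  have eD: "inner e (D e) = lam"
  proof -
    have "(\<lambda>n. inner (xr n) (D (xr n))) \<longlonglongrightarrow> inner e (D e)"
      by (intro tendsto_inner e bounded_linear.tendsto[OF D_bl])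
    moreover have "(\<lambda>n. inner (xr n) (D (xr n))) \<longlonglongrightarrow> lam"
    proof -
      have "(\<lambda>n. lam - q (xr n)) \<longlonglongrightarrow> lam - 0" by (intro tendsto_diff tendsto_const qr0)
      moreover have "(\<lambda>n. lam - q (xr n)) = (\<lambda>n. inner (xr n) (D (xr n)))"
        using xs(2) by (simp add: q_def xr_def)
      ultimately show ?thesis by simp
    qed
    ultimately show ?thesis using LIMSEQ_unique by blast
  qed
  have qe: "q e = 0" using ne1 eD by (simp add: q_def)
  have bz: "lam * inner e u - inner e (D u) = 0" if "u \<in> S" for u
  proof (rule quad_zero)
    fix t :: real
    have "e + t *\<^sub>R u \<in> S" using eS that S(1) by (simp add: subspace_add subspace_scale)
    then have "q (e + t *\<^sub>R u) \<ge> 0" by (rule q_nn)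
    then show "2 * t * (lam * inner e u - inner e (D u)) + t^2 * q u \<ge> 0"
      using Q_lin[of lam e t u] qe by (simp add: q_def)
  qed
  define u where "u = lam *\<^sub>R e - D e"
  have uS: "u \<in> S" using eS S(1) S(4)[OF eS] by (simp add: u_def subspace_diff subspace_scale)
  have "lam * inner e u - inner e (D u) = inner u u"
    by (simp add: u_def inner_diff_left D_sym[of e])
  then have "inner u u = 0" using bz[OF uS] by simp
  then have "D e = lam *\<^sub>R e" by (simp add: u_def)
  then show ?thesis using eS ne1 eD lam_pos le_lam by auto
qed

end

locale opctx2 = opctx J D for J :: "'h::{real_inner,complete_space} \<Rightarrow> 'h" and D +
  fixes B :: real
  assumes DJ: "\<And>x. D (J x) = J (D x)"
    and bnd: "\<And>n w. orthonormal_fam J n w \<Longrightarrow> (\<Sum>i<n. inner (w i) (D (w i))) \<le> B"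
begin

definition Sperp :: "'h list \<Rightarrow> 'h set" where
  "Sperp L = {x. \<forall>v\<in>set L. inner v x = 0 \<and> inner (J v) x = 0}"

definition good :: "'h set \<Rightarrow> 'h \<Rightarrow> bool" where
  "good S e \<longleftrightarrow> e \<in> S \<and> norm e = 1 \<and> D e = inner e (D e) *\<^sub>R e \<and> inner e (D e) > 0 \<and>
           (\<forall>x\<in>S. inner x (D x) \<le> inner e (D e) * (norm x)^2)"

definition stepv :: "'h set \<Rightarrow> 'h" where
  "stepv S = (if \<exists>x\<in>S. norm x = 1 \<and> inner x (D x) > 0 then SOME e. good S e else 0)"

primrec EL :: "nat \<Rightarrow> 'h list" where
  "EL 0 = []"
| "EL (Suc k) = EL k @ [stepv (Sperp (EL k))]"

definition ev :: "nat \<Rightarrow> 'h" where "ev k = stepv (Sperp (EL k))"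

lemma EL_map: "EL k = map ev [0..<k]"
  by (induction k) (simp_all add: ev_def)

definition Sk :: "nat \<Rightarrow> 'h set" where
  "Sk k = {x. \<forall>i<k. inner (ev i) x = 0 \<and> inner (J (ev i)) x = 0}"

lemma ev_Sk: "ev k = stepv (Sk k)"
proof -
  have "Sperp (EL k) = Sk k" unfolding Sperp_def Sk_def EL_map by auto
  then show ?thesis by (simp add: ev_def)
qed

definition lam :: "nat \<Rightarrow> real" where "lam k = inner (ev k) (D (ev k))"

lemma Sk_subspace: "subspace (Sk k)"
  unfolding subspace_def Sk_def by (auto simp: inner_add_right)

lemma Sk_closed: "closed (Sk k)"
proof -
  have "Sk k = (\<Inter>i\<in>{..<k}. {x. inner (ev i) x = 0} \<inter> {x. inner (J (ev i)) x = 0})"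
    unfolding Sk_def by auto
  then show ?thesis by (simp only:) (intro closed_INT ballI closed_Int closed_hyperplane)
qed

lemma Sk_J: assumes "x \<in> Sk k" shows "J x \<in> Sk k"
proof -
  have "inner (ev i) (J x) = 0 \<and> inner (J (ev i)) (J x) = 0" if "i < k" for i
  proof -
    have a: "inner (ev i) x = 0" "inner (J (ev i)) x = 0" using assms that by (auto simp: Sk_def)
    have "inner (J (ev i)) x = - inner (ev i) (J x)" by (rule Jin_left[OF cs])
    then have "inner (ev i) (J x) = 0" using a by simp
    moreover have "inner (J (ev i)) (J x) = 0" using a by (simp add: JinJ[OF cs])
    ultimately show ?thesis by simp
  qed
  then show ?thesis by (simp add: Sk_def)
qed

lemma Sk_D: assumes "\<And>i. i < k \<Longrightarrow> D (ev i) = lam i *\<^sub>R ev i" "x \<in> Sk k"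
  shows "D x \<in> Sk k"
proof -
  have "inner (ev i) (D x) = 0 \<and> inner (J (ev i)) (D x) = 0" if "i < k" for i
  proof -
    have "inner (ev i) (D x) = inner (D (ev i)) x" by (rule D_sym)
    also have "\<dots> = lam i * inner (ev i) x" using assms(1)[OF that] by simp
    finally have 1: "inner (ev i) (D x) = 0" using assms(2) that by (simp add: Sk_def)
    have "inner (J (ev i)) (D x) = inner (D (J (ev i))) x" by (rule D_sym)
    also have "\<dots> = lam i * inner (J (ev i)) x" using assms(1)[OF that] by (simp add: DJ J_scale[OF cs])
    finally have 2: "inner (J (ev i)) (D x) = 0" using assms(2) that by (simp add: Sk_def)
    show ?thesis using 1 2 by simp
  qed
  then show ?thesis by (simp add: Sk_def)
qed

lemma nonpos_of_nopos: assumes "\<not> (\<exists>x\<in>S. norm x = 1 \<and> inner x (D x) > 0)" "subspace S" "x \<in> S"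
  shows "inner x (D x) \<le> 0"
proof (cases "x = 0")
  case False
  define x' where "x' = (1 / norm x) *\<^sub>R x"
  have "x' \<in> S" using assms(2,3) by (simp add: x'_def subspace_scale)
  moreover have "norm x' = 1" using False by (simp add: x'_def)
  ultimately have "inner x' (D x') \<le> 0" using assms(1) by force
  moreover have "inner x' (D x') = (1/norm x)^2 * inner x (D x)" unfolding x'_def quad_scale ..
  ultimately show ?thesis using False by (simp add: zero_le_mult_iff mult_le_0_iff)
qed simp

lemma ev_props:
  "D (ev k) = lam k *\<^sub>R ev k \<and> ev k \<in> Sk k \<and> (\<forall>x\<in>Sk k. inner x (D x) \<le> lam k * (norm x)^2)
   \<and> (ev k = 0 \<or> (norm (ev k) = 1 \<and> lam k > 0))"
proof (induction k rule: less_induct)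
  case (less k)
  have eig: "\<And>i. i < k \<Longrightarrow> D (ev i) = lam i *\<^sub>R ev i" using less by blast
  show ?case
  proof (cases "\<exists>x\<in>Sk k. norm x = 1 \<and> inner x (D x) > 0")
    case True
    have bnd': "\<And>n w. orthonormal_fam J n w \<Longrightarrow> (\<forall>i<n. w i \<in> Sk k) \<Longrightarrow> (\<Sum>i<n. inner (w i) (D (w i))) \<le> B"
      using bnd by blast
    have "\<exists>e\<in>Sk k. norm e = 1 \<and> D e = inner e (D e) *\<^sub>R e \<and> inner e (D e) > 0 \<and>
           (\<forall>x\<in>Sk k. inner x (D x) \<le> inner e (D e) * (norm x)^2)"
      by (rule max_eig[OF Sk_subspace Sk_closed Sk_J Sk_D[OF eig] bnd' True])
    then have ex: "\<exists>e. good (Sk k) e" unfolding good_def by (elim bexE) (rule exI, elim conjE, intro conjI, assumption+)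
    have "ev k = (SOME e. good (Sk k) e)" unfolding ev_Sk stepv_def using True by (rule if_P)
    then have g: "good (Sk k) (ev k)" using someI_ex[OF ex] by simp
    have g1: "ev k \<in> Sk k" and g2: "norm (ev k) = 1" and g3: "D (ev k) = lam k *\<^sub>R ev k"
      and g4: "lam k > 0" and g5: "\<forall>x\<in>Sk k. inner x (D x) \<le> lam k * (norm x)^2"
      using g unfolding good_def lam_def by simp_all
    show ?thesis using g1 g2 g3 g4 g5 by blast
  next
    case False
    then have "ev k = 0" unfolding ev_Sk stepv_def by (rule if_not_P)
    moreover have "inner x (D x) \<le> 0" if "x \<in> Sk k" for x
      by (rule nonpos_of_nopos[OF False Sk_subspace that])
    ultimately show ?thesis by (simp add: lam_def Sk_def)
  qed
qed

lemma ev_eig: "D (ev k) = lam k *\<^sub>R ev k" using ev_props[of k] by (elim conjE)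
lemma ev_in: "ev k \<in> Sk k" using ev_props[of k] by (elim conjE)
lemma ev_max: "x \<in> Sk k \<Longrightarrow> inner x (D x) \<le> lam k * (norm x)^2" using ev_props[of k] by (elim conjE) auto
lemma ev_cases: "ev k = 0 \<or> (norm (ev k) = 1 \<and> lam k > 0)" using ev_props[of k] by (elim conjE)
lemma lam_nn: "lam k \<ge> 0" using ev_cases[of k] by (auto simp: lam_def)
lemma ev_norm_le: "norm (ev k) \<le> 1" using ev_cases[of k] by auto

lemma ev_zero_Suc: assumes "ev k = 0" shows "ev (Suc k) = 0"
proof -
  have "Sk (Suc k) = Sk k" using assms by (auto simp: Sk_def less_Suc_eq J_zero[OF cs])
  moreover have "lam k = 0" using assms by (simp add: lam_def)
  ultimately have "\<forall>x\<in>Sk (Suc k). inner x (D x) \<le> 0" using ev_max[of _ k] by simp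
  then have "\<not> (\<exists>x\<in>Sk (Suc k). norm x = 1 \<and> inner x (D x) > 0)" by force
  then show ?thesis unfolding ev_Sk stepv_def by (rule if_not_P)
qed

lemma ev_zero_mono: assumes "ev k = 0" "k \<le> j" shows "ev j = 0"
  using assms(2) by (induction j rule: dec_induct) (use assms(1) ev_zero_Suc in auto)

lemma ev_ON: assumes "\<forall>k<M. ev k \<noteq> 0" shows "orthonormal_fam J M ev"
  unfolding orth_fam_iff[OF cs]
proof (intro allI impI)
  fix i j assume ij: "i < M" "j < M"
  have n1: "norm (ev i) = 1" "norm (ev j) = 1" using assms ij ev_cases by blast+
  show "inner (ev i) (ev j) = (if i = j then 1 else 0) \<and> inner (J (ev i)) (ev j) = 0"
  proof (cases i j rule: linorder_cases)
    case less
    then show ?thesis using ev_in[of j] by (simp add: Sk_def)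
  next
    case equal
    then show ?thesis using n1 by (simp add: power2_norm_eq_inner[symmetric] Jin_self[OF cs])
  next
    case greater
    then have "inner (ev j) (ev i) = 0 \<and> inner (J (ev j)) (ev i) = 0" using ev_in[of i] by (simp add: Sk_def)
    then show ?thesis using greater Jin_left[OF cs, of "ev i" "ev j"] Jin_left[OF cs, of "ev j" "ev i"]
      by (simp add: inner_commute)
  qed
qed

lemma split_M: obtains M where "M \<le> N" "\<forall>k<M. ev k \<noteq> 0" "\<And>k. M \<le> k \<Longrightarrow> ev k = 0 \<or> N \<le> k"
proof (cases "\<exists>k<N. ev k = 0")
  case True
  define M where "M = (LEAST k. ev k = 0)"
  have "ev M = 0" unfolding M_def using True by (auto intro: LeastI_ex)
  moreover have "M \<le> N" using True unfolding M_def by (meson Least_le less_imp_le order_trans)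
  moreover have "\<forall>k<M. ev k \<noteq> 0" unfolding M_def using not_less_Least by blast
  ultimately show ?thesis using that ev_zero_mono by blast
next
  case False
  then show ?thesis using that[of N] by auto
qed

lemma lam_sum: "(\<Sum>k<n. lam k) \<le> B"
proof -
  obtain M where M: "M \<le> n" "\<forall>k<M. ev k \<noteq> 0" "\<And>k. M \<le> k \<Longrightarrow> ev k = 0 \<or> n \<le> k"
    using split_M by blast
  have "(\<Sum>k<n. lam k) = (\<Sum>k<M. lam k)"
  proof (rule sum.mono_neutral_right)
    show "{..<M} \<subseteq> {..<n}" using M(1) by auto
    show "\<forall>i\<in>{..<n} - {..<M}. lam i = 0"
    proof
      fix i assume "i \<in> {..<n} - {..<M}"
      then have "M \<le> i" "i < n" by auto
      then have "ev i = 0" using M(3)[of i] by auto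
      then show "lam i = 0" by (simp add: lam_def)
    qed
  qed simp
  also have "\<dots> \<le> B" using bnd[OF ev_ON[OF M(2)]] by (simp add: lam_def)
  finally show ?thesis .
qed

lemma lam_summable: "summable lam"
  using lam_nn lam_sum by (intro summableI_nonneg_bounded) auto

lemma lam_0: "lam \<longlonglongrightarrow> 0" by (rule summable_LIMSEQ_zero[OF lam_summable])

end

lemma my_summable_Cauchy:
  fixes f :: "nat \<Rightarrow> 'a::{real_normed_vector,complete_space}"
  assumes r: "\<forall>e>0. \<exists>N. \<forall>m\<ge>N. \<forall>n. norm (sum f {m..<n}) < e"
  shows "summable f"
  unfolding summable_iff_convergent Cauchy_convergent_iff [symmetric] Cauchy_iff
proof clarify
  fix e :: real
  assume "0 < e"
  with r obtain N where N: "\<And>m n. m \<ge> N \<Longrightarrow> norm (sum f {m..<n}) < e"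
    by blast
  have "norm (sum f {..<m} - sum f {..<n}) < e" if "m\<ge>N" "n\<ge>N" for m n
  proof (cases m n rule: linorder_class.le_cases)
    assume "m \<le> n"
    then show ?thesis
      by (metis N finite_lessThan lessThan_minus_lessThan lessThan_subset_iff norm_minus_commute sum_diff \<open>m\<ge>N\<close>)
  next
    assume "n \<le> m"
    then show ?thesis
      by (metis N finite_lessThan lessThan_minus_lessThan lessThan_subset_iff sum_diff \<open>n\<ge>N\<close>)
  qed
  then show "\<exists>M. \<forall>m\<ge>M. \<forall>n\<ge>M. norm (sum f {..<m} - sum f {..<n}) < e"
    by blast
qed

lemma my_comparison:
  fixes f :: "nat \<Rightarrow> 'a::{real_normed_vector,complete_space}"
  assumes g: "summable g" and N: "\<And>n. norm (f n) \<le> g n"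
  shows "summable f"
proof (rule my_summable_Cauchy, intro allI impI)
  fix e :: real
  assume "0 < e"
  then obtain Ng where Ng: "\<And>m n. m \<ge> Ng \<Longrightarrow> norm (sum g {m..<n}) < e"
    using g by (fastforce simp: summable_Cauchy)
  have "norm (sum f {m..<n}) < e" if "m\<ge>Ng" for m n
  proof -
    have "norm (sum f {m..<n}) \<le> sum g {m..<n}"
      using N by (force intro: sum_norm_le)
    also have "... \<le> norm (sum g {m..<n})"
      by simp
    also have "... < e"
      using Ng that by auto
    finally show ?thesis .
  qed
  then show "\<exists>N. \<forall>m\<ge>N. \<forall>n. norm (sum f {m..<n}) < e"
    by blast
qed

lemma my_norm_suminf_le:
  fixes f :: "nat \<Rightarrow> 'a::{real_normed_vector,complete_space}"
  assumes g: "summable g" and N: "\<And>n. norm (f n) \<le> g n"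
  shows "norm (suminf f) \<le> suminf g"
proof -
  have f: "summable f" by (rule my_comparison[OF g N])
  have "(\<lambda>n. norm (sum f {..<n})) \<longlonglongrightarrow> norm (suminf f)"
    by (intro tendsto_norm summable_LIMSEQ f)
  moreover have "norm (sum f {..<n}) \<le> suminf g" for n
  proof -
    have "norm (sum f {..<n}) \<le> sum g {..<n}" using N by (force intro: sum_norm_le)
    also have "\<dots> \<le> suminf g" using g N by (intro sum_le_suminf) (auto intro: order_trans[OF norm_ge_zero])
    finally show ?thesis .
  qed
  ultimately show ?thesis by (intro LIMSEQ_le_const2) auto
qed

context opctx2 begin

definition Pt :: "nat \<Rightarrow> 'h \<Rightarrow> 'h" where
  "Pt i x = lam i *\<^sub>R (inner (ev i) x *\<^sub>R ev i + inner (J (ev i)) x *\<^sub>R J (ev i))"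

definition Pop :: "'h \<Rightarrow> 'h" where "Pop x = (\<Sum>i. Pt i x)"

lemma ev_n: "norm (ev i) \<le> 1" "norm (J (ev i)) \<le> 1"
  using ev_norm_le by (auto simp: norm_J[OF cs])

lemma inner_ev_le: "\<bar>inner (ev i) x\<bar> \<le> norm x" "\<bar>inner (J (ev i)) x\<bar> \<le> norm x"
  "\<bar>inner x (ev i)\<bar> \<le> norm x" "\<bar>inner x (J (ev i))\<bar> \<le> norm x"
proof -
  have m1: "norm (ev i) * norm x \<le> norm x" using mult_right_mono[OF ev_n(1) norm_ge_zero[of x]] by simp
  have m2: "norm (J (ev i)) * norm x \<le> norm x" using mult_right_mono[OF ev_n(2) norm_ge_zero[of x]] by simp
  show "\<bar>inner (ev i) x\<bar> \<le> norm x" using Cauchy_Schwarz_ineq2[of "ev i" x] m1 by linarith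
  show "\<bar>inner (J (ev i)) x\<bar> \<le> norm x" using Cauchy_Schwarz_ineq2[of "J (ev i)" x] m2 by linarith
  show "\<bar>inner x (ev i)\<bar> \<le> norm x" using Cauchy_Schwarz_ineq2[of "ev i" x] m1 by (simp add: inner_commute)
  show "\<bar>inner x (J (ev i))\<bar> \<le> norm x" using Cauchy_Schwarz_ineq2[of "J (ev i)" x] m2 by (simp add: inner_commute)
qed

lemma Pt_norm: "norm (Pt i x) \<le> 2 * lam i * norm x"
proof -
  have a: "norm (inner (ev i) x *\<^sub>R ev i) \<le> norm x"
    using mult_mono[OF inner_ev_le(1)[of i x] ev_n(1)] by simp
  have b: "norm (inner (J (ev i)) x *\<^sub>R J (ev i)) \<le> norm x"
    using mult_mono[OF inner_ev_le(2)[of i x] ev_n(2)] by simp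
  have c: "norm (inner (ev i) x *\<^sub>R ev i + inner (J (ev i)) x *\<^sub>R J (ev i)) \<le> norm x + norm x"
    using norm_triangle_ineq[of "inner (ev i) x *\<^sub>R ev i" "inner (J (ev i)) x *\<^sub>R J (ev i)"] a b by linarith
  have "norm (Pt i x) = lam i * norm (inner (ev i) x *\<^sub>R ev i + inner (J (ev i)) x *\<^sub>R J (ev i))"
    using lam_nn[of i] by (simp add: Pt_def)
  also have "\<dots> \<le> lam i * (norm x + norm x)" using mult_left_mono[OF c lam_nn[of i]] .
  finally show ?thesis by simp
qed

lemma g_summable: "summable (\<lambda>i. 2 * lam i * norm x)"
  using summable_mult2[OF summable_mult[OF lam_summable, of 2], of "norm x"] by simp

lemma Pt_summable: "summable (\<lambda>i. Pt i x)"
  by (rule my_comparison[OF g_summable Pt_norm])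

lemma Pt_add: "Pt i (x + y) = Pt i x + Pt i y"
  by (simp add: Pt_def inner_add_right algebra_simps scaleR_add_left)

lemma Pt_scale: "Pt i (c *\<^sub>R x) = c *\<^sub>R Pt i x"
  by (simp add: Pt_def algebra_simps)

lemma Pop_bl: "bounded_linear Pop"
proof (rule bounded_linear_intro[where K = "2 * suminf lam"])
  fix x y show "Pop (x + y) = Pop x + Pop y"
    unfolding Pop_def Pt_add by (rule suminf_add[OF Pt_summable Pt_summable, symmetric])
next
  fix c x show "Pop (c *\<^sub>R x) = c *\<^sub>R Pop x"
    unfolding Pop_def Pt_scale
    by (rule bounded_linear.suminf[OF bounded_linear_scaleR_right Pt_summable, symmetric])
next
  fix x
  have "norm (Pop x) \<le> (\<Sum>i. 2 * lam i * norm x)" unfolding Pop_def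
    by (rule my_norm_suminf_le[OF g_summable Pt_norm])
  also have "\<dots> = norm x * (2 * suminf lam)"
    using suminf_mult[OF lam_summable, of "2 * norm x"] by (simp add: algebra_simps)
  finally show "norm (Pop x) \<le> norm x * (2 * suminf lam)" .
qed

lemma Pt_J: "Pt i (J x) = J (Pt i x)"
proof -
  have a: "inner (ev i) (J x) = - inner (J (ev i)) x" using Jin_left[OF cs, of "ev i" x] by simp
  show ?thesis
    by (simp add: Pt_def a JinJ[OF cs] J_add[OF cs] J_scale[OF cs] JJ[OF cs] algebra_simps)
qed

lemma Pop_J: "Pop (J x) = J (Pop x)"
  unfolding Pop_def Pt_J by (rule bounded_linear.suminf[OF J_bl[OF cs] Pt_summable, symmetric])

lemma inner_Pop: "inner y (Pop x) = (\<Sum>i. lam i * (inner (ev i) x * inner y (ev i) + inner (J (ev i)) x * inner y (J (ev i))))"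
proof -
  have "inner y (Pop x) = (\<Sum>i. inner y (Pt i x))" unfolding Pop_def
    by (rule bounded_linear.suminf[OF bounded_linear_inner_right Pt_summable])
  then show ?thesis by (simp add: Pt_def inner_add_right algebra_simps)
qed

lemma inner_Pop_summable: "summable (\<lambda>i. lam i * (inner (ev i) x * inner y (ev i) + inner (J (ev i)) x * inner y (J (ev i))))"
proof -
  have "summable (\<lambda>i. inner y (Pt i x))"
    by (rule bounded_linear.summable[OF bounded_linear_inner_right Pt_summable])
  then show ?thesis by (simp add: Pt_def inner_add_right algebra_simps)
qed

lemma Pop_sym: "inner y (Pop x) = inner (Pop y) x"
  unfolding inner_Pop inner_commute[of "Pop y" x] by (simp add: inner_commute mult.commute)

lemma Pop_sa: "selfadjoint_op J Pop"
  unfolding sa_iff[OF cs] bounded_op_def using Pop_bl Pop_J Pop_sym by blast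

lemma quad_Pop: "inner x (Pop x) = (\<Sum>i. lam i * ((inner (ev i) x)^2 + (inner (J (ev i)) x)^2))"
  unfolding inner_Pop by (simp add: power2_eq_square inner_commute)

lemma quad_Pop_summable: "summable (\<lambda>i. lam i * ((inner (ev i) x)^2 + (inner (J (ev i)) x)^2))"
  using inner_Pop_summable[of x x] by (simp add: power2_eq_square inner_commute)

lemma Pop_nn: "inner x (Pop x) \<ge> 0"
  unfolding quad_Pop by (rule suminf_nonneg[OF quad_Pop_summable]) (simp add: lam_nn)

lemma Pop_ge_partial: "(\<Sum>i<M. lam i * ((inner (ev i) x)^2 + (inner (J (ev i)) x)^2)) \<le> inner x (Pop x)"
  unfolding quad_Pop by (rule sum_le_suminf[OF quad_Pop_summable]) (auto simp: lam_nn)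

end

context opctx2 begin

lemma D_evod: "D (evod J ev j) = lam (j div 2) *\<^sub>R evod J ev j"
  by (simp add: evod_def ev_eig DJ J_scale[OF cs])

lemma D_le_P_N: "inner x (D x) \<le> inner x (Pop x) + lam N * (norm x)^2"
proof -
  obtain M where M: "M \<le> N" "\<forall>k<M. ev k \<noteq> 0" "\<And>k. M \<le> k \<Longrightarrow> ev k = 0 \<or> N \<le> k"
    using split_M by blast
  define u where "u = evod J ev"
  have uON: "rON (2*M) u" unfolding u_def by (rule cON_evod[OF cs ev_ON[OF M(2)]])
  define y where "y = proj (2*M) u x"
  define r where "r = x - y"
  have ru: "inner (u j) r = 0" if "j < 2*M" for j
    using proj_orth[OF uON that] by (simp add: r_def y_def)
  have rS: "r \<in> Sk N"
  proof -
    have "inner (ev i) r = 0 \<and> inner (J (ev i)) r = 0" if "i < N" for i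
    proof (cases "i < M")
      case True
      then show ?thesis using ru[of "2*i"] ru[of "2*i+1"] by (simp add: u_def evod_def)
    next
      case False
      then have "ev i = 0" using M(3)[of i] that by auto
      then show ?thesis by (simp add: J_zero[OF cs])
    qed
    then show ?thesis by (simp add: Sk_def)
  qed
  have Dy: "D y = (\<Sum>j<2*M. (inner (u j) x * lam (j div 2)) *\<^sub>R u j)"
  proof -
    have "D y = (\<Sum>j<2*M. D (inner (u j) x *\<^sub>R u j))" unfolding y_def proj_def
      by (rule linear_sum[OF bounded_linear.linear[OF D_bl]])
    also have "\<dots> = (\<Sum>j<2*M. (inner (u j) x * lam (j div 2)) *\<^sub>R u j)"
      by (rule sum.cong) (simp_all add: D_scale u_def D_evod)
    finally show ?thesis .
  qed
  have ru': "inner r (u j) = 0" if "j < 2*M" for j using ru[OF that] by (simp add: inner_commute)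
  have rDy: "inner r (D y) = 0"
  proof -
    have "inner r (D y) = (\<Sum>j<2*M. (inner (u j) x * lam (j div 2)) * inner r (u j))"
      unfolding Dy by (simp add: inner_sum_right)
    also have "\<dots> = 0" by (rule sum.neutral) (simp add: ru')
    finally show ?thesis .
  qed
  have yDr: "inner y (D r) = 0" using rDy by (metis D_sym inner_commute)
  have yDy: "inner y (D y) = (\<Sum>i<M. lam i * ((inner (ev i) x)^2 + (inner (J (ev i)) x)^2))"
  proof -
    have "inner y (D y) = (\<Sum>j<2*M. inner (u j) x * (inner (u j) x * lam (j div 2)))"
      unfolding Dy unfolding y_def proj_def by (rule rON_comb2[OF uON])
    also have "\<dots> = (\<Sum>i<M. lam i * ((inner (ev i) x)^2 + (inner (J (ev i)) x)^2))"
      unfolding sum_even_odd by (simp add: u_def evod_def power2_eq_square algebra_simps)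
    finally show ?thesis .
  qed
  have rDr: "inner r (D r) \<le> lam N * (norm x)^2"
  proof -
    have "inner r (D r) \<le> lam N * (norm r)^2" by (rule ev_max[OF rS])
    also have "\<dots> \<le> lam N * (norm x)^2"
      using proj_pythag[OF uON, of x] lam_nn[of N]
      by (intro mult_left_mono) (simp_all add: r_def y_def)
    finally show ?thesis .
  qed
  have "inner x (D x) = inner y (D y) + inner y (D r) + inner r (D y) + inner r (D r)"
    unfolding r_def by (simp add: D_diff inner_diff_left inner_diff_right algebra_simps)
  also have "\<dots> \<le> inner x (Pop x) + lam N * (norm x)^2"
    using yDy yDr rDy rDr Pop_ge_partial[where M=M and x=x] by linarith
  finally show ?thesis .
qed

lemma D_le_P: "inner x (D x) \<le> inner x (Pop x)"
proof -
  have "(\<lambda>N. inner x (Pop x) + lam N * (norm x)^2) \<longlonglongrightarrow> inner x (Pop x) + 0 * (norm x)^2"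
    by (intro tendsto_intros lam_0)
  then have lim: "(\<lambda>N. inner x (Pop x) + lam N * (norm x)^2) \<longlonglongrightarrow> inner x (Pop x)" by simp
  show ?thesis by (rule LIMSEQ_le_const[OF lim]) (use D_le_P_N in blast)
qed

end

lemma amgm: fixes a b :: real shows "\<bar>a\<bar> * \<bar>b\<bar> \<le> (a^2 + b^2) / 2"
proof -
  have "0 \<le> (\<bar>a\<bar> - \<bar>b\<bar>)^2" by simp
  moreover have "(\<bar>a\<bar> - \<bar>b\<bar>)^2 = a^2 + b^2 - 2*(\<bar>a\<bar>*\<bar>b\<bar>)"
    by (simp add: power2_eq_square algebra_simps)
  ultimately have "0 \<le> a^2 + b^2 - 2*(\<bar>a\<bar>*\<bar>b\<bar>)" by simp
  then show ?thesis by (simp add: field_simps)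
qed

context opctx2 begin

definition GG :: "'h \<Rightarrow> 'h \<Rightarrow> nat \<Rightarrow> real" where
  "GG h g k = \<bar>inner (ev k) g\<bar> * \<bar>inner h (ev k)\<bar> + \<bar>inner (J (ev k)) g\<bar> * \<bar>inner h (J (ev k))\<bar>"

lemma GG_le: assumes "norm h \<le> 1" "norm g \<le> 1" shows "GG h g k \<le> 2" "GG h g k \<ge> 0"
proof -
  have "\<bar>inner (ev k) g\<bar> * \<bar>inner h (ev k)\<bar> \<le> 1"
    using inner_ev_le(1)[of k g] inner_ev_le(3)[of h k] assms by (intro mult_le_one) auto
  moreover have "\<bar>inner (J (ev k)) g\<bar> * \<bar>inner h (J (ev k))\<bar> \<le> 1"
    using inner_ev_le(2)[of k g] inner_ev_le(4)[of h k] assms by (intro mult_le_one) auto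
  ultimately show "GG h g k \<le> 2" by (simp add: GG_def)
  show "GG h g k \<ge> 0" by (simp add: GG_def)
qed

lemma lamGG_summable: assumes "norm h \<le> 1" "norm g \<le> 1" shows "summable (\<lambda>k. lam k * GG h g k)"
proof (rule summable_comparison_test'[where g="\<lambda>k. 2 * lam k" and N=0])
  show "summable (\<lambda>k. 2 * lam k)" by (rule summable_mult[OF lam_summable])
  fix k
  have "norm (lam k * GG h g k) = lam k * GG h g k"
    using GG_le(2)[OF assms, of k] lam_nn[of k] by (simp add: abs_mult)
  also have "\<dots> \<le> lam k * 2" by (rule mult_left_mono[OF GG_le(1)[OF assms] lam_nn])
  finally show "norm (lam k * GG h g k) \<le> 2 * lam k" by (simp add: mult.commute)
qed

lemma absP: assumes "norm h \<le> 1" "norm g \<le> 1"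
  shows "\<bar>inner h (Pop g)\<bar> \<le> (\<Sum>k. lam k * GG h g k)"
  unfolding inner_Pop real_norm_def[symmetric]
proof (rule my_norm_suminf_le[OF lamGG_summable[OF assms]])
  fix k
  have "\<bar>inner (ev k) g * inner h (ev k) + inner (J (ev k)) g * inner h (J (ev k))\<bar> \<le> GG h g k"
    unfolding GG_def abs_mult[symmetric] by (rule abs_triangle_ineq)
  then show "norm (lam k * (inner (ev k) g * inner h (ev k) + inner (J (ev k)) g * inner h (J (ev k)))) \<le> lam k * GG h g k"
    using lam_nn[of k] by (simp add: abs_mult mult_left_mono)
qed

lemma GG_sum: assumes f: "orthonormal_fam J n f" and g: "orthonormal_fam J n g"
  shows "(\<Sum>i<n. GG (f i) (g i) k + GG (J (f i)) (g i) k) \<le> 4"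
proof -
  let ?e = "ev k"
  define A where "A i = inner ?e (g i)" for i
  define A' where "A' i = inner (J ?e) (g i)" for i
  define Bf where "Bf i = inner (f i) ?e" for i
  define B' where "B' i = inner (f i) (J ?e)" for i
  have c1: "\<bar>inner (J (f i)) ?e\<bar> = \<bar>B' i\<bar>" for i using Jin_left[OF cs, of "f i" ?e] by (simp add: B'_def)
  have c2: "\<bar>inner (J (f i)) (J ?e)\<bar> = \<bar>Bf i\<bar>" for i by (simp add: Bf_def JinJ[OF cs])
  have per: "GG (f i) (g i) k + GG (J (f i)) (g i) k \<le> (A i)^2 + (A' i)^2 + (Bf i)^2 + (B' i)^2" for i
  proof -
    have "GG (f i) (g i) k + GG (J (f i)) (g i) k = \<bar>A i\<bar>*\<bar>Bf i\<bar> + \<bar>A' i\<bar>*\<bar>B' i\<bar> + \<bar>A i\<bar>*\<bar>B' i\<bar> + \<bar>A' i\<bar>*\<bar>Bf i\<bar>"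
      unfolding GG_def c1 c2 by (simp add: A_def A'_def Bf_def B'_def)
    also have "\<dots> \<le> ((A i)^2 + (Bf i)^2) / 2 + ((A' i)^2 + (B' i)^2) / 2 + ((A i)^2 + (B' i)^2) / 2 + ((A' i)^2 + (Bf i)^2) / 2"
      by (intro add_mono amgm)
    also have "\<dots> = (A i)^2 + (A' i)^2 + (Bf i)^2 + (B' i)^2" by (simp add: field_simps)
    finally show ?thesis .
  qed
  have ne: "(norm ?e)^2 \<le> 1" "(norm (J ?e))^2 \<le> 1" using ev_n[of k] by (auto simp: power_le_one)
  have s1: "(\<Sum>i<n. (A i)^2) \<le> 1" using bessel[OF cON_rON[OF cs g], of ?e] ne by (simp add: A_def inner_commute)
  have s2: "(\<Sum>i<n. (A' i)^2) \<le> 1" using bessel[OF cON_rON[OF cs g], of "J ?e"] ne by (simp add: A'_def inner_commute)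
  have s3: "(\<Sum>i<n. (Bf i)^2) \<le> 1" using bessel[OF cON_rON[OF cs f], of ?e] ne by (simp add: Bf_def)
  have s4: "(\<Sum>i<n. (B' i)^2) \<le> 1" using bessel[OF cON_rON[OF cs f], of "J ?e"] ne by (simp add: B'_def)
  have "(\<Sum>i<n. GG (f i) (g i) k + GG (J (f i)) (g i) k) \<le> (\<Sum>i<n. (A i)^2 + (A' i)^2 + (Bf i)^2 + (B' i)^2)"
    by (rule sum_mono[OF per])
  also have "\<dots> = (\<Sum>i<n. (A i)^2) + (\<Sum>i<n. (A' i)^2) + (\<Sum>i<n. (Bf i)^2) + (\<Sum>i<n. (B' i)^2)"
    by (simp add: sum.distrib)
  finally show ?thesis using s1 s2 s3 s4 by linarith
qed

lemma Pop_tn: "trace_norm J Pop \<le> ereal (4 * suminf lam)"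
proof (rule tn_le[OF cs])
  fix n g f assume g: "orthonormal_fam J n g" and f: "orthonormal_fam J n f"
  have ng: "norm (g i) \<le> 1" "norm (f i) \<le> 1" "norm (J (f i)) \<le> 1" if "i < n" for i
  proof -
    have "inner (g i) (g i) = 1" "inner (f i) (f i) = 1" using g f that unfolding orth_fam_iff[OF cs] by auto
    then show "norm (g i) \<le> 1" "norm (f i) \<le> 1"
      by (simp_all add: norm_eq_sqrt_inner)
    then show "norm (J (f i)) \<le> 1" by (simp add: norm_J[OF cs])
  qed
  define H where "H i k = lam k * (GG (f i) (g i) k + GG (J (f i)) (g i) k)" for i k
  have Hs: "summable (H i)" if "i < n" for i
    unfolding H_def distrib_left
    by (intro summable_add lamGG_summable) (use ng[OF that] in auto)
  have "(\<Sum>i<n. cmod (cinner J (f i) (Pop (g i)))) \<le> (\<Sum>i<n. suminf (H i))"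
  proof (rule sum_mono)
    fix i assume "i \<in> {..<n}"
    then have i: "i < n" by simp
    have "cmod (cinner J (f i) (Pop (g i))) \<le> \<bar>inner (f i) (Pop (g i))\<bar> + \<bar>inner (J (f i)) (Pop (g i))\<bar>"
      by (rule cinner_norm[OF cs])
    also have "\<dots> \<le> (\<Sum>k. lam k * GG (f i) (g i) k) + (\<Sum>k. lam k * GG (J (f i)) (g i) k)"
      using absP[OF ng(2)[OF i] ng(1)[OF i]] absP[OF ng(3)[OF i] ng(1)[OF i]] by linarith
    also have "\<dots> = suminf (H i)" unfolding H_def distrib_left
      by (rule suminf_add) (intro lamGG_summable; use ng[OF i] in auto)+
    finally show "cmod (cinner J (f i) (Pop (g i))) \<le> suminf (H i)" .
  qed
  also have "\<dots> = (\<Sum>k. \<Sum>i<n. H i k)" by (rule suminf_sum[symmetric]) (use Hs in auto)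
  also have "\<dots> \<le> (\<Sum>k. 4 * lam k)"
  proof (rule suminf_le)
    fix k
    have "(\<Sum>i<n. H i k) = lam k * (\<Sum>i<n. GG (f i) (g i) k + GG (J (f i)) (g i) k)"
      by (simp add: H_def sum_distrib_left)
    also have "\<dots> \<le> lam k * 4" by (rule mult_left_mono[OF GG_sum[OF f g] lam_nn])
    finally show "(\<Sum>i<n. H i k) \<le> 4 * lam k" by simp
    show "summable (\<lambda>k. \<Sum>i<n. H i k)" by (rule summable_sum) (use Hs in auto)
    show "summable (\<lambda>k. 4 * lam k)" by (rule summable_mult[OF lam_summable])
  qed
  also have "\<dots> = 4 * suminf lam" by (rule suminf_mult[OF lam_summable])
  finally show "(\<Sum>i<n. cmod (cinner J (f i) (Pop (g i)))) \<le> 4 * suminf lam" .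
qed

lemma Pop_tc: "trace_class J Pop"
  unfolding trace_class_def bounded_op_def using Pop_bl Pop_J Pop_tn
  by (auto intro: le_less_trans)

end

lemma pos_part:
  fixes J :: "'h::{real_inner,complete_space} \<Rightarrow> 'h"
  assumes cs: "complex_structure J" and tc: "trace_class J A" and sa: "selfadjoint_op J A"
  shows "\<exists>P. trace_class J P \<and> selfadjoint_op J P \<and> (\<forall>x. 0 \<le> inner x (P x)) \<and> (\<forall>x. inner x (A x) \<le> inner x (P x))"
proof -
  obtain b where b: "trace_norm J A = ereal b"
    using tc tn_nonneg[OF cs, of A] unfolding trace_class_def by (cases "trace_norm J A") auto
  have sym: "\<And>x y. inner x (A y) = inner (A x) y" using sa_sym[OF cs sa] .
  have bo: "bounded_op J A" using sa by (simp add: selfadjoint_op_def)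
  have bnd: "(\<Sum>i<n. inner (w i) (A (w i))) \<le> b" if o: "orthonormal_fam J n w" for n w
  proof -
    have "(\<Sum>i<n. inner (w i) (A (w i))) \<le> (\<Sum>i<n. cmod (cinner J (w i) (A (w i))))"
      by (rule sum_mono) (metis cinner_def complex.sel(1) complex_Re_le_cmod)
    also have "\<dots> \<le> b" using tn_ge[OF cs o o, of A] b by simp
    finally show ?thesis .
  qed
  interpret oc: opctx2 J A b
    using cs bo sym bnd by (intro opctx2.intro opctx.intro opctx2_axioms.intro) (auto simp: bounded_op_def)
  show ?thesis using oc.Pop_tc oc.Pop_sa oc.Pop_nn oc.D_le_P by blast
qed

lemma tc_zero: assumes cs: "complex_structure J" shows "trace_class J (\<lambda>x. 0)" "selfadjoint_op J (\<lambda>x. 0)"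
proof -
  have bo: "bounded_op J (\<lambda>x. 0)" by (simp add: bounded_op_def J_zero[OF cs])
  have "trace_norm J (\<lambda>x. 0) \<le> ereal 0"
    by (rule tn_le[OF cs]) (simp add: cinner_def zero_complex.code[symmetric])
  then show "trace_class J (\<lambda>x. 0)" using bo by (auto simp: trace_class_def intro: le_less_trans)
  show "selfadjoint_op J (\<lambda>x. 0)" using bo by (simp add: sa_iff[OF cs])
qed

lemma tc_sum: assumes cs: "complex_structure J" and fin: "finite C"
  and P: "\<And>c. c \<in> C \<Longrightarrow> trace_class J (P c) \<and> selfadjoint_op J (P c)"
  shows "trace_class J (\<lambda>x. \<Sum>c\<in>C. P c x) \<and> selfadjoint_op J (\<lambda>x. \<Sum>c\<in>C. P c x)"
  using fin P
proof (induction C rule: finite_induct)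
  case empty then show ?case using tc_zero[OF cs] by simp
next
  case (insert c C)
  have e: "(\<lambda>x. \<Sum>c\<in>insert c C. P c x) = (\<lambda>x. P c x + (\<Sum>c\<in>C. P c x))"
    using insert(1,2) by simp
  have "trace_class J (\<lambda>x. \<Sum>c\<in>C. P c x) \<and> selfadjoint_op J (\<lambda>x. \<Sum>c\<in>C. P c x)"
    using insert by simp
  moreover have "trace_class J (P c) \<and> selfadjoint_op J (P c)" using insert by simp
  ultimately show ?case unfolding e using tn_add[OF cs] sa_add[OF cs] by blast
qed

lemma finite_ball_cover: fixes \<delta> :: real
  assumes "compact (UNIV::'a::metric_space set)" "\<delta> > 0"
  obtains C where "finite C" "(UNIV::'a set) \<subseteq> (\<Union>c\<in>C. ball c \<delta>)"
proof -
  have cover: "(UNIV::'a set) \<subseteq> (\<Union>c\<in>UNIV. ball c \<delta>)" using assms(2) by auto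
  have opn: "\<And>T. T \<in> (UNIV::'a set) \<Longrightarrow> open (ball T \<delta>)" by simp
  show ?thesis
  proof (rule compactE_image[OF assms(1) opn cover])
    fix C' :: "'a set" assume "C' \<subseteq> UNIV" "finite C'" "UNIV \<subseteq> (\<Union>c\<in>C'. ball c \<delta>)"
    then show ?thesis using that[of C'] by simp
  qed
qed

theorem lemma3:
  fixes J :: "'h::{real_inner,complete_space} \<Rightarrow> 'h"
    and T :: "'a::metric_space \<Rightarrow> 'h \<Rightarrow> 'h"
  assumes "complex_structure J"
    and "compact (UNIV :: 'a set)"
    and "\<forall>\<theta>. trace_class J (T \<theta>) \<and> selfadjoint_op J (T \<theta>)"
    and "regular J T"
  shows "\<exists>T\<Theta>. trace_class J T\<Theta> \<and> (\<forall>\<theta>. loewner_le J (T \<theta>) T\<Theta>)"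
proof -
  note cs = assms(1)
  have lim: "((\<lambda>\<delta>. omega J T UNIV \<delta>) \<longlongrightarrow> 0) (at_right 0)"
    using assms(2,4) by (simp add: regular_def)
  have "eventually (\<lambda>\<delta>. omega J T UNIV \<delta> < 1) (at_right (0::real))"
    using order_tendstoD(2)[OF lim, of 1] by (simp add: zero_less_one)
  then have "eventually (\<lambda>\<delta>. 0 < \<delta> \<and> omega J T UNIV \<delta> < 1) (at_right (0::real))"
    by (rule eventually_conj[OF eventually_at_right_less])
  then have "\<exists>\<delta>. 0 < \<delta> \<and> omega J T UNIV \<delta> < 1"
    by (rule eventually_happens'[rotated]) simp
  then obtain \<delta> :: real where d: "\<delta> > 0" "omega J T UNIV \<delta> < 1" by blast
  then obtain X where X: "trace_class J X"
    and Xle: "\<forall>(\<theta>, \<eta>) \<in> Kdelta UNIV \<delta>.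
         loewner_le J (- X) (\<lambda>x. T \<theta> x - T \<eta> x) \<and> loewner_le J (\<lambda>x. T \<theta> x - T \<eta> x) X"
    unfolding omega_def Inf_less_iff by blast
  have tT: "trace_class J (T \<theta>)" "selfadjoint_op J (T \<theta>)" for \<theta> using assms(3) by auto
  have "\<forall>c. \<exists>P. trace_class J P \<and> selfadjoint_op J P \<and> (\<forall>x. 0 \<le> inner x (P x)) \<and> (\<forall>x. inner x (T c x) \<le> inner x (P x))"
    using pos_part[OF cs tT] by blast
  then obtain PP where PP: "\<And>c. trace_class J (PP c)" "\<And>c. selfadjoint_op J (PP c)"
    "\<And>c x. 0 \<le> inner x (PP c x)" "\<And>c x. inner x (T c x) \<le> inner x (PP c x)" by metis
  obtain C where C: "finite C" "(UNIV::'a set) \<subseteq> (\<Union>c\<in>C. ball c \<delta>)"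
    by (rule finite_ball_cover[OF assms(2) d(1)])
  define TT where "TT x = X x + (\<Sum>c\<in>C. PP c x)" for x
  have sumP: "trace_class J (\<lambda>x. \<Sum>c\<in>C. PP c x) \<and> selfadjoint_op J (\<lambda>x. \<Sum>c\<in>C. PP c x)"
    by (rule tc_sum[OF cs C(1)]) (use PP in auto)
  have TT_tc: "trace_class J TT" unfolding TT_def[abs_def] by (rule tn_add[OF cs X sumP[THEN conjunct1]])
  have "(undefined::'a, undefined::'a) \<in> Kdelta UNIV \<delta>" using d(1) by (simp add: Kdelta_def)
  then have X_sa: "selfadjoint_op J X" using Xle by (auto simp: loewner_le_def)
  have TT_sa: "selfadjoint_op J TT" unfolding TT_def[abs_def] by (rule sa_add[OF cs X_sa sumP[THEN conjunct2]])
  have "loewner_le J (T \<theta>) TT" for \<theta>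
  proof -
    obtain c where c: "c \<in> C" "\<theta> \<in> ball c \<delta>" using C(2) by blast
    then have "(\<theta>, c) \<in> Kdelta UNIV \<delta>" by (simp add: Kdelta_def dist_commute)
    then have l: "loewner_le J (\<lambda>x. T \<theta> x - T c x) X" using Xle by auto
    then have dsa: "selfadjoint_op J (\<lambda>x. T \<theta> x - T c x)" by (simp add: loewner_le_def)
    have l': "inner x (T \<theta> x - T c x) \<le> inner x (X x)" for x
      using l unfolding loewner_iff[OF cs dsa X_sa] by blast
    have "inner x (T \<theta> x) \<le> inner x (TT x)" for x
    proof -
      have "inner x (T \<theta> x) = inner x (T \<theta> x - T c x) + inner x (T c x)"
        by (simp add: inner_diff_right)
      also have "\<dots> \<le> inner x (X x) + inner x (PP c x)" using l'[of x] PP(4)[of x c] by linarith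
      also have "inner x (PP c x) \<le> (\<Sum>c'\<in>C. inner x (PP c' x))"
        by (rule member_le_sum[OF c(1) _ C(1)]) (use PP(3) in auto)
      then have "inner x (X x) + inner x (PP c x) \<le> inner x (X x) + (\<Sum>c'\<in>C. inner x (PP c' x))" by simp
      also have "\<dots> = inner x (TT x)" by (simp add: TT_def inner_add_right inner_sum_right)
      finally show ?thesis .
    qed
    then show ?thesis unfolding loewner_iff[OF cs tT(2) TT_sa] by blast
  qed
  then show ?thesis using TT_tc by blast
qed

end
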